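(* Let $N$ be a Poisson process on $[0,\infty)$ with intensity $\lambda>0$, with points $0<X_1<X_2<\cdots$, and for $\epsilon>0$ let $\beta_0(x)=\beta_0^{(\epsilon)}(x)$ be the number of complete clusters in $[0,x]$ for connection threshold $\epsilon$. Let $m$ be a positive integer and $x>0$. Then $\mathbb{E}[\beta_0(x)^m]\to\mathbb{E}[N_x^m]$ as $\epsilon\to0$.
   Context: $N_x=\#\{n\ge1:X_n\le x\}$. A cluster (for threshold $\epsilon$) is a maximal set of consecutive points $X_j,\dots,X_k$ with $X_{l+1}-X_l\le\epsilon$ for $j\le l<k$; its end is $X_k+\epsilon$. $\beta_0(x)$ is the number of clusters whose end is $\le x$. *)

theory Defs
  imports "HOL-Probability.Probability"
begin

text \<open>Points of the process: \<open>X n\<close> for \<open>n \<ge> 1\<close> is the n-th arrival time,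
  given as the partial sum of the first n inter-arrival times \<open>T 0, ..., T (n-1)\<close>.\<close>
definition arrival :: "(nat \<Rightarrow> 'a \<Rightarrow> real) \<Rightarrow> nat \<Rightarrow> 'a \<Rightarrow> real" where
  "arrival T n \<omega> = (\<Sum>k<n. T k \<omega>)"

definition count_pts :: "(nat \<Rightarrow> real) \<Rightarrow> real \<Rightarrow> nat" where
  "count_pts X x = card {n. 1 \<le> n \<and> X n \<le> x}"

text \<open>A cluster (threshold eps) is a maximal run X_j..X_k of consecutive points
  with successive gaps \<le> eps; it is determined by its last index k, which is
  exactly an index k \<ge> 1 with X_(k+1) - X_k > eps. Its end is X_k + eps.
  beta0 counts clusters whose end is \<le> x.\<close>
definition cluster_last :: "(nat \<Rightarrow> real) \<Rightarrow> real \<Rightarrow> nat \<Rightarrow> bool" where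
  "cluster_last X eps k \<longleftrightarrow> 1 \<le> k \<and> X (Suc k) - X k > eps"

definition beta0 :: "(nat \<Rightarrow> real) \<Rightarrow> real \<Rightarrow> real \<Rightarrow> nat" where
  "beta0 X eps x = card {k. cluster_last X eps k \<and> X k + eps \<le> x}"

end

theory Submission
  imports Defs
begin


lemma card_lt_meas:
  fixes P :: "nat \<Rightarrow> 'a \<Rightarrow> bool"
  assumes [measurable]: "\<And>n. Measurable.pred M (P n)"
  shows "(\<lambda>\<omega>. real (card {n. n < b \<and> P n \<omega>})) \<in> borel_measurable M"
proof -
  have "(\<lambda>\<omega>. real (card {n. n < b \<and> P n \<omega>})) = (\<lambda>\<omega>. \<Sum>n<b. indicator {\<omega>. P n \<omega>} \<omega>)"
  proof
    fix \<omega>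
    have "{n. n < b \<and> P n \<omega>} = {n\<in>{..<b}. P n \<omega>}" by auto
    then show "real (card {n. n < b \<and> P n \<omega>}) = (\<Sum>n<b. indicator {\<omega>. P n \<omega>} \<omega>)"
      by (simp add: indicator_def of_bool_def sum.If_cases Int_def)
  qed
  moreover have "(\<lambda>\<omega>. \<Sum>n<b. indicator {\<omega>. P n \<omega>} \<omega> :: real) \<in> borel_measurable M"
    by measurable
  ultimately show ?thesis by simp
qed

lemma card_meas:
  fixes P :: "nat \<Rightarrow> 'a \<Rightarrow> bool"
  assumes [measurable]: "\<And>n. Measurable.pred M (P n)"
  shows "(\<lambda>\<omega>. card {n. P n \<omega>}) \<in> measurable M (count_space UNIV)"
  unfolding measurable_count_space_eq2_countable
proof (intro conjI ballI)
  fix j :: nat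
  have eq: "(\<lambda>\<omega>. card {n. P n \<omega>}) -` {j} \<inter> space M =
    {\<omega>\<in>space M. (\<exists>b. (\<forall>n. b \<le> n \<longrightarrow> \<not> P n \<omega>) \<and> real (card {n. n < b \<and> P n \<omega>}) = real j)
       \<or> (j = 0 \<and> (\<forall>b. \<exists>n. b \<le> n \<and> P n \<omega>))}"
  proof (intro set_eqI iffI)
    fix \<omega> assume 1: "\<omega> \<in> (\<lambda>\<omega>. card {n. P n \<omega>}) -` {j} \<inter> space M"
    show "\<omega> \<in> {\<omega>\<in>space M. (\<exists>b. (\<forall>n. b \<le> n \<longrightarrow> \<not> P n \<omega>) \<and> real (card {n. n < b \<and> P n \<omega>}) = real j)
       \<or> (j = 0 \<and> (\<forall>b. \<exists>n. b \<le> n \<and> P n \<omega>))}"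
    proof (cases "finite {n. P n \<omega>}")
      case True
      then obtain b where b: "\<forall>n\<in>{n. P n \<omega>}. n < b"
        using finite_nat_bounded[OF True] by auto
      then have "{n. n < b \<and> P n \<omega>} = {n. P n \<omega>}" by auto
      moreover have "\<forall>n. b \<le> n \<longrightarrow> \<not> P n \<omega>" using b by auto
      ultimately show ?thesis using 1 by auto
    next
      case False
      then have "\<forall>b. \<exists>n. b \<le> n \<and> P n \<omega>"
        by (metis (mono_tags, lifting) finite_nat_set_iff_bounded_le mem_Collect_eq nat_le_linear order_trans)
      with False 1 show ?thesis by auto
    qed
  next
    fix \<omega> assume "\<omega> \<in> {\<omega>\<in>space M. (\<exists>b. (\<forall>n. b \<le> n \<longrightarrow> \<not> P n \<omega>) \<and> real (card {n. n < b \<and> P n \<omega>}) = real j)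
       \<or> (j = 0 \<and> (\<forall>b. \<exists>n. b \<le> n \<and> P n \<omega>))}"
    then have sp: "\<omega> \<in> space M" and
      d: "(\<exists>b. (\<forall>n. b \<le> n \<longrightarrow> \<not> P n \<omega>) \<and> real (card {n. n < b \<and> P n \<omega>}) = real j)
       \<or> (j = 0 \<and> (\<forall>b. \<exists>n. b \<le> n \<and> P n \<omega>))" by auto
    show "\<omega> \<in> (\<lambda>\<omega>. card {n. P n \<omega>}) -` {j} \<inter> space M"
      using d
    proof
      assume "\<exists>b. (\<forall>n. b \<le> n \<longrightarrow> \<not> P n \<omega>) \<and> real (card {n. n < b \<and> P n \<omega>}) = real j"
      then obtain b where b1: "\<forall>n. b \<le> n \<longrightarrow> \<not> P n \<omega>" and b2: "real (card {n. n < b \<and> P n \<omega>}) = real j" by blast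
      have "{n. n < b \<and> P n \<omega>} = {n. P n \<omega>}" using b1 by (auto simp: not_le[symmetric])
      then show ?thesis using b2 sp by simp
    next
      assume 3: "j = 0 \<and> (\<forall>b. \<exists>n. b \<le> n \<and> P n \<omega>)"
      have "infinite {n. P n \<omega>}"
        using 3 by (metis finite_nat_set_iff_bounded_le le_trans mem_Collect_eq nat_le_linear not_less_eq_eq)
      then show ?thesis using 3 sp by simp
    qed
  qed
  have [measurable]: "\<And>b. (\<lambda>\<omega>. real (card {n. n < b \<and> P n \<omega>})) \<in> borel_measurable M"
    by (rule card_lt_meas) simp
  show "(\<lambda>\<omega>. card {n. P n \<omega>}) -` {j} \<inter> space M \<in> sets M"
    unfolding eq by measurable
qed auto



lemma erlang_tail:
  assumes l: "0 < l" and x: "0 \<le> x"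
  shows "emeasure (density lborel (erlang_density k l)) {..x} \<le> ennreal (l^(Suc k) * x^(Suc k) / fact k)"
proof -
  define C where "C = l^(Suc k) * x^k / fact k"
  have C0: "0 \<le> C" using l x by (simp add: C_def)
  have "emeasure (density lborel (erlang_density k l)) {..x}
      = (\<integral>\<^sup>+ t. ennreal (erlang_density k l t) * indicator {..x} t \<partial>lborel)"
    by (simp add: emeasure_density)
  also have "\<dots> \<le> (\<integral>\<^sup>+ t. ennreal C * indicator {0..x} t \<partial>lborel)"
  proof (intro nn_integral_mono)
    fix t :: real
    show "ennreal (erlang_density k l t) * indicator {..x} t \<le> ennreal C * indicator {0..x} t"
    proof (cases "0 \<le> t \<and> t \<le> x")
      case True
      have "t^k \<le> x^k" using True by (intro power_mono) auto
      moreover have "exp (- l * t) \<le> 1" using True l by simp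
      ultimately have "l^(Suc k) * t^k * exp (- l * t) \<le> l^(Suc k) * x^k * 1"
        using True l by (intro mult_mono) auto
      then have "erlang_density k l t \<le> C"
        using True by (simp add: erlang_density_def C_def divide_right_mono)
      then show ?thesis using True by (simp add: ennreal_leI)
    next
      case False
      then show ?thesis by (auto simp: erlang_density_def indicator_def)
    qed
  qed
  also have "\<dots> = ennreal C * ennreal x"
    using x by (simp add: nn_integral_cmult_indicator)
  also have "\<dots> = ennreal (l^(Suc k) * x^(Suc k) / fact k)"
    using C0 x by (simp add: ennreal_mult[symmetric] C_def mult_ac)
  finally show ?thesis .
qed

lemma pow_le_fact_exp:
  fixes n k :: nat
  shows "real n ^ k \<le> fact k * exp (real n)"
proof -
  have "real n ^ k /\<^sub>R fact k \<le> (\<Sum>i. real n ^ i /\<^sub>R fact i)"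
    using sum_le_suminf[OF summable_exp_generic[of "real n"], of "{k}"] by simp
  then have "real n ^ k / fact k \<le> exp (real n)" by (simp add: exp_def divide_inverse ac_simps)
  then show ?thesis by (simp add: divide_le_eq ac_simps)
qed

lemma summable_bound:
  fixes y :: real and m :: nat
  assumes y: "0 \<le> y"
  shows "summable (\<lambda>n. real n ^ m * (y ^ n / fact (n - 1)))"
proof (rule summable_comparison_test')
  show "summable (\<lambda>n. fact (Suc m) * ((exp 1 * y) ^ n /\<^sub>R fact n))"
    by (intro summable_mult summable_exp_generic)
  fix n :: nat assume "1 \<le> n"
  then obtain j where n: "n = Suc j" by (cases n) auto
  have f: "fact n = real n * fact (n - 1)" using n by simp
  have "real n ^ m * (y ^ n / fact (n - 1)) = real n ^ (Suc m) * y ^ n / fact n"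
  proof -
    have np: "real n > 0" using n by simp
    have fp: "fact (n - 1) > (0::real)" by simp
    show ?thesis unfolding f power_Suc using np fp by (simp add: field_simps)
  qed
  also have "\<dots> \<le> fact (Suc m) * exp (real n) * y ^ n / fact n"
    using y by (intro divide_right_mono mult_right_mono pow_le_fact_exp) auto
  also have "\<dots> = fact (Suc m) * ((exp 1 * y) ^ n /\<^sub>R fact n)"
    by (simp add: power_mult_distrib exp_of_nat_mult[symmetric] field_simps)
  finally show "norm (real n ^ m * (y ^ n / fact (n - 1))) \<le> fact (Suc m) * ((exp 1 * y) ^ n /\<^sub>R fact n)"
    using y by simp
qed



lemma ev_eq:
  fixes X :: "nat \<Rightarrow> real"
  assumes gap: "\<And>k. X (Suc k) - X k > 0"
    and fin: "finite {n. 1 \<le> n \<and> X n \<le> x}"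
    and nx: "\<And>n. 1 \<le> n \<Longrightarrow> X n \<noteq> x"
  shows "eventually (\<lambda>eps. beta0 X eps x = count_pts X x) (at_right 0)"
proof -
  define S where "S = {n. 1 \<le> n \<and> X n \<le> x}"
  have "\<forall>k\<in>S. eventually (\<lambda>eps. eps < X (Suc k) - X k \<and> eps \<le> x - X k) (at_right (0::real))"
  proof
    fix k assume k: "k \<in> S"
    then have "X k < x" using nx[of k] by (auto simp: S_def)
    then have p: "0 < min (X (Suc k) - X k) (x - X k)" using gap[of k] by simp
    show "eventually (\<lambda>eps. eps < X (Suc k) - X k \<and> eps \<le> x - X k) (at_right (0::real))"
      by (rule eventually_at_rightI[OF _ p]) auto
  qed
  then have "eventually (\<lambda>eps. \<forall>k\<in>S. eps < X (Suc k) - X k \<and> eps \<le> x - X k) (at_right (0::real))"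
    using fin by (intro eventually_ball_finite) (auto simp: S_def)
  moreover have "eventually (\<lambda>eps. 0 < eps) (at_right (0::real))" by (rule eventually_at_right_less)
  ultimately show ?thesis
  proof eventually_elim
    case (elim eps)
    have "{k. cluster_last X eps k \<and> X k + eps \<le> x} = S"
      using elim by (auto simp: S_def cluster_last_def)
    then show ?case by (simp add: beta0_def count_pts_def S_def)
  qed
qed

lemma beta_le:
  fixes X :: "nat \<Rightarrow> real"
  assumes fin: "finite {n. 1 \<le> n \<and> X n \<le> x}" and e: "0 < eps"
  shows "beta0 X eps x \<le> count_pts X x"
  unfolding beta0_def count_pts_def
  by (rule card_mono[OF fin]) (use e in \<open>auto simp: cluster_last_def\<close>)

lemma card_pow_le:
  fixes S :: "nat set" and m :: nat
  assumes "finite S" "0 \<notin> S" "0 < m"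
  shows "real (card S) ^ m \<le> (\<Sum>n\<in>S. real n ^ m)"
proof (cases "S = {}")
  case True then show ?thesis using assms by (simp add: power_0_left)
next
  case False
  have "S \<subseteq> {1..Max S}" using assms by (auto simp: Suc_le_eq intro: Max_ge gr0I)
  then have "card S \<le> Max S" using card_mono[of "{1..Max S}" S] by simp
  then have "real (card S) ^ m \<le> real (Max S) ^ m" by (intro power_mono) auto
  also have "\<dots> \<le> (\<Sum>n\<in>S. real n ^ m)"
    using assms False by (intro member_le_sum) auto
  finally show ?thesis .
qed

lemma sum_fin_le:
  fixes S :: "nat set" and m :: nat
  assumes "finite S" "0 \<notin> S" "0 < m"
  shows "ennreal (real (card S) ^ m) \<le> (\<Sum>n. ennreal (real n ^ m) * indicator S n)"
proof -
  have "ennreal (real (card S) ^ m) \<le> ennreal (\<Sum>n\<in>S. real n ^ m)"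
    using card_pow_le[OF assms] by (rule ennreal_leI)
  also have "\<dots> = (\<Sum>n\<in>S. ennreal (real n ^ m) * indicator S n)" by simp
  also have "\<dots> \<le> (\<Sum>n. ennreal (real n ^ m) * indicator S n)"
    by (rule sum_le_suminf) (auto simp: assms)
  finally show ?thesis .
qed

lemma sum_inf_top:
  fixes S :: "nat set" and m :: nat
  assumes "infinite S" "0 \<notin> S"
  shows "(\<Sum>n. ennreal (real n ^ m) * indicator S n) = top"
proof -
  have "of_nat k \<le> (\<Sum>n. ennreal (real n ^ m) * indicator S n)" for k
  proof -
    obtain F where F: "F \<subseteq> S" "finite F" "card F = k"
      using infinite_arbitrarily_large[OF assms(1)] by blast
    have "of_nat k = (\<Sum>n\<in>F. (1::ennreal))" using F by simp
    also have "\<dots> \<le> (\<Sum>n\<in>F. ennreal (real n ^ m) * indicator S n)"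
    proof (intro sum_mono)
      fix n assume n: "n \<in> F"
      then have "1 \<le> n" using F assms by (cases n) auto
      then have "1 \<le> real n ^ m" by (simp add: one_le_power)
      then show "1 \<le> ennreal (real n ^ m) * indicator S n" using n F
        by (auto simp: indicator_def ennreal_leI[where x=1, simplified])
    qed
    also have "\<dots> \<le> (\<Sum>n. ennreal (real n ^ m) * indicator S n)"
      by (rule sum_le_suminf) (auto simp: F)
    finally show ?thesis .
  qed
  then have "(SUP k. of_nat k :: ennreal) \<le> (\<Sum>n. ennreal (real n ^ m) * indicator S n)"
    by (intro SUP_least) auto
  then show ?thesis by (simp add: ennreal_SUP_of_nat_eq_top top_unique)
qed



theorem lemma2:
  fixes M :: "'a measure" and T :: "nat \<Rightarrow> 'a \<Rightarrow> real"
    and lam x :: real and m :: nat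
  assumes "prob_space M"
    and "lam > 0"
    and "prob_space.indep_vars M (\<lambda>_. borel) T UNIV"
    and "\<And>k. distributed M lborel (T k) (exponential_density lam)"
    and "m > 0" and "x > 0"
  shows "((\<lambda>eps. prob_space.expectation M
              (\<lambda>\<omega>. real (beta0 (\<lambda>n. arrival T n \<omega>) eps x) ^ m))
          \<longlongrightarrow> prob_space.expectation M (\<lambda>\<omega>. real (count_pts (\<lambda>n. arrival T n \<omega>) x) ^ m))
         (at_right 0)"
proof -
  interpret prob_space M by fact
  note lam = assms(2) and ind = assms(3) and dT = assms(4) and m = assms(5) and x = assms(6)
  have Tm[measurable]: "\<And>k. T k \<in> borel_measurable M"
    using distributed_measurable[OF dT] by simp
  have Xm[measurable]: "\<And>n. (\<lambda>\<omega>. arrival T n \<omega>) \<in> borel_measurable M"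
    unfolding arrival_def by measurable
  have distX: "distributed M lborel (\<lambda>\<omega>. arrival T n \<omega>) (erlang_density (n - 1) lam)" if n: "1 \<le> n" for n
  proof -
    have "distributed M lborel (\<lambda>\<omega>. \<Sum>k\<in>{..<n}. T k \<omega>) (erlang_density (card {..<n} - 1) lam)"
      using n by (intro exponential_distributed_sum lam dT indep_vars_subset[OF ind]) (auto simp: lessThan_empty_iff)
    then show ?thesis by (simp add: arrival_def)
  qed
  have distr_eq: "distr M lborel (\<lambda>\<omega>. arrival T n \<omega>) = density lborel (erlang_density (n - 1) lam)"
    if n: "1 \<le> n" for n
    using distributed_distr_eq_density[OF distX[OF n]] .
  define A where "A n = {\<omega>\<in>space M. 1 \<le> n \<and> arrival T n \<omega> \<le> x}" for n
  have Am[measurable]: "A n \<in> sets M" for n unfolding A_def by measurable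
  have tail: "emeasure M (A n) \<le> ennreal ((lam * x) ^ n / fact (n - 1))" for n
  proof (cases "1 \<le> n")
    case True
    have "A n = (\<lambda>\<omega>. arrival T n \<omega>) -` {..x} \<inter> space M" using True by (auto simp: A_def)
    then have "emeasure M (A n) = emeasure (distr M lborel (\<lambda>\<omega>. arrival T n \<omega>)) {..x}"
      by (simp add: emeasure_distr)
    also have "\<dots> = emeasure (density lborel (erlang_density (n - 1) lam)) {..x}"
      using distr_eq[OF True] by simp
    also have "\<dots> \<le> ennreal (lam ^ Suc (n - 1) * x ^ Suc (n - 1) / fact (n - 1))"
      using lam x by (intro erlang_tail) auto
    also have "\<dots> = ennreal ((lam * x) ^ n / fact (n - 1))"
      using True by (simp add: power_mult_distrib)
    finally show ?thesis .
  next
    case False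
    then show ?thesis by (simp add: A_def)
  qed
  define G where "G \<omega> = (\<Sum>n. ennreal (real n ^ m) * indicator (A n) \<omega>)" for \<omega>
  have Gm[measurable]: "G \<in> borel_measurable M" unfolding G_def by measurable
  define b where "b n = real n ^ m * ((lam * x) ^ n / fact (n - 1))" for n
  have bs: "summable b" unfolding b_def using lam x by (intro summable_bound) simp
  have b0: "0 \<le> b n" for n unfolding b_def using lam x by simp
  have "integral\<^sup>N M G = (\<Sum>n. integral\<^sup>N M (\<lambda>\<omega>. ennreal (real n ^ m) * indicator (A n) \<omega>))"
    unfolding G_def by (rule nn_integral_suminf) measurable
  also have "\<dots> = (\<Sum>n. ennreal (real n ^ m) * emeasure M (A n))"
    by (simp add: nn_integral_cmult_indicator)
  also have "\<dots> \<le> (\<Sum>n. ennreal (b n))"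
  proof (intro suminf_le summableI)
    fix n
    have "ennreal (real n ^ m) * emeasure M (A n) \<le> ennreal (real n ^ m) * ennreal ((lam * x) ^ n / fact (n - 1))"
      by (intro mult_left_mono tail) auto
    also have "\<dots> = ennreal (b n)" unfolding b_def using lam x by (subst ennreal_mult) auto
    finally show "ennreal (real n ^ m) * emeasure M (A n) \<le> ennreal (b n)" .
  qed
  also have "\<dots> < top"
    using ennreal_suminf_neq_top[OF bs b0] by (simp add: top.not_eq_extremum)
  finally have Gfin: "integral\<^sup>N M G \<noteq> top" by simp
  have AE_G: "AE \<omega> in M. G \<omega> \<noteq> top"
    using nn_integral_PInf_AE[OF Gm] Gfin by simp
  define S where "S \<omega> = {n. 1 \<le> n \<and> arrival T n \<omega> \<le> x}" for \<omega>
  have G_eq: "G \<omega> = (\<Sum>n. ennreal (real n ^ m) * indicator (S \<omega>) n)" if "\<omega> \<in> space M" for \<omega>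
    unfolding G_def using that by (simp add: A_def S_def indicator_def)
  have S0: "0 \<notin> S \<omega>" for \<omega> by (simp add: S_def)
  have cnt_le_G: "ennreal (real (count_pts (\<lambda>n. arrival T n \<omega>) x) ^ m) \<le> G \<omega>"
    if "\<omega> \<in> space M" for \<omega>
  proof (cases "finite (S \<omega>)")
    case True
    then show ?thesis using sum_fin_le[OF True S0 m] G_eq[OF that]
      by (simp add: count_pts_def S_def)
  next
    case False
    then show ?thesis using sum_inf_top[OF False S0, of m] G_eq[OF that] by simp
  qed
  have AE_fin: "AE \<omega> in M. finite (S \<omega>)"
    using AE_G AE_space
  proof eventually_elim
    case (elim \<omega>)
    show ?case
    proof (rule ccontr)
      assume "infinite (S \<omega>)"
      then show False using sum_inf_top[OF _ S0, of \<omega> m] G_eq[of \<omega>] elim by simp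
    qed
  qed
  have cntm[measurable]: "(\<lambda>\<omega>. real (count_pts (\<lambda>n. arrival T n \<omega>) x) ^ m) \<in> borel_measurable M"
  proof -
    have "(\<lambda>\<omega>. card {n. 1 \<le> n \<and> arrival T n \<omega> \<le> x}) \<in> measurable M (count_space UNIV)"
      by (rule card_meas) measurable
    then show ?thesis unfolding count_pts_def
      by (rule measurable_compose) (rule borel_measurable_count_space)
  qed
  have betam[measurable]: "(\<lambda>\<omega>. real (beta0 (\<lambda>n. arrival T n \<omega>) eps x) ^ m) \<in> borel_measurable M" for eps
  proof -
    have "(\<lambda>\<omega>. card {k. cluster_last (\<lambda>n. arrival T n \<omega>) eps k \<and> arrival T k \<omega> + eps \<le> x})
        \<in> measurable M (count_space UNIV)"
      unfolding cluster_last_def by (rule card_meas) measurable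
    then show ?thesis unfolding beta0_def
      by (rule measurable_compose) (rule borel_measurable_count_space)
  qed
  have intw: "integrable M (\<lambda>\<omega>. real (count_pts (\<lambda>n. arrival T n \<omega>) x) ^ m)"
  proof (rule integrableI_bounded)
    have "(\<integral>\<^sup>+ \<omega>. ennreal (norm (real (count_pts (\<lambda>n. arrival T n \<omega>) x) ^ m)) \<partial>M) \<le> integral\<^sup>N M G"
      by (intro nn_integral_mono) (use cnt_le_G in simp)
    then show "(\<integral>\<^sup>+ \<omega>. ennreal (norm (real (count_pts (\<lambda>n. arrival T n \<omega>) x) ^ m)) \<partial>M) < \<infinity>"
      using Gfin by (simp add: top.not_eq_extremum le_less_trans)
  qed simp
  have AE_T: "AE \<omega> in M. \<forall>k. 0 < T k \<omega>"
  proof (subst AE_all_countable, intro allI)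
    fix k
    have "prob {\<omega>\<in>space M. T k \<omega> \<le> 0} = 0"
      using exponential_distributedD_le[OF dT, of 0] lam by simp
    then show "AE \<omega> in M. 0 < T k \<omega>"
      by (subst AE_iff_measurable[where N="{\<omega>\<in>space M. T k \<omega> \<le> 0}"])
         (auto simp: emeasure_eq_measure not_less)
  qed
  have AE_X: "AE \<omega> in M. \<forall>n. 1 \<le> n \<longrightarrow> arrival T n \<omega> \<noteq> x"
  proof (subst AE_all_countable, intro allI)
    fix n :: nat
    show "AE \<omega> in M. 1 \<le> n \<longrightarrow> arrival T n \<omega> \<noteq> x"
    proof (cases "1 \<le> n")
      case True
      have "{\<omega>\<in>space M. arrival T n \<omega> = x} = (\<lambda>\<omega>. arrival T n \<omega>) -` {x} \<inter> space M" by auto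
      then have "emeasure M {\<omega>\<in>space M. arrival T n \<omega> = x}
          = emeasure (distr M lborel (\<lambda>\<omega>. arrival T n \<omega>)) {x}"
        by (simp add: emeasure_distr)
      also have "\<dots> = emeasure (density lborel (erlang_density (n - 1) lam)) {x}"
        using distr_eq[OF True] by simp
      also have "\<dots> = 0" by (simp add: emeasure_density)
      finally have "emeasure M {\<omega>\<in>space M. arrival T n \<omega> = x} = 0" by simp
      then show ?thesis
        using True by (subst AE_iff_measurable[where N="{\<omega>\<in>space M. arrival T n \<omega> = x}"]) auto
    qed simp
  qed
  have AE_ev: "AE \<omega> in M. eventually (\<lambda>eps. beta0 (\<lambda>n. arrival T n \<omega>) eps x = count_pts (\<lambda>n. arrival T n \<omega>) x) (at_right 0)"
    using AE_T AE_X AE_fin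
  proof eventually_elim
    case (elim \<omega>)
    show ?case
    proof (rule ev_eq)
      show "0 < arrival T (Suc k) \<omega> - arrival T k \<omega>" for k
        using elim by (simp add: arrival_def)
    qed (use elim in \<open>auto simp: S_def\<close>)
  qed
  show ?thesis
  proof (rule tendsto_at_right_sequentially[where b=1])
    fix E :: "nat \<Rightarrow> real"
    assume Epos: "\<And>n. 0 < E n" and E1: "\<And>n. E n < 1" and Edec: "decseq E" and Elim: "E \<longlonglongrightarrow> 0"
    have Ef: "filterlim E (at_right 0) sequentially"
      using Elim Epos by (auto simp: filterlim_at intro!: always_eventually) (metis less_irrefl)
    show "(\<lambda>n. expectation (\<lambda>\<omega>. real (beta0 (\<lambda>n. arrival T n \<omega>) (E n) x) ^ m))
        \<longlonglongrightarrow> expectation (\<lambda>\<omega>. real (count_pts (\<lambda>n. arrival T n \<omega>) x) ^ m)"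
    proof (rule integral_dominated_convergence[where w="\<lambda>\<omega>. real (count_pts (\<lambda>n. arrival T n \<omega>) x) ^ m"])
      show "AE \<omega> in M. (\<lambda>i. real (beta0 (\<lambda>n. arrival T n \<omega>) (E i) x) ^ m)
          \<longlonglongrightarrow> real (count_pts (\<lambda>n. arrival T n \<omega>) x) ^ m"
        using AE_ev
      proof eventually_elim
        case (elim \<omega>)
        have "eventually (\<lambda>i. beta0 (\<lambda>n. arrival T n \<omega>) (E i) x = count_pts (\<lambda>n. arrival T n \<omega>) x) sequentially"
          using filterlim_iff[THEN iffD1, OF Ef, rule_format, OF elim] .
        then show ?case by (rule tendsto_eventually[OF eventually_mono]) simp
      qed
      show "AE \<omega> in M. norm (real (beta0 (\<lambda>n. arrival T n \<omega>) (E i) x) ^ m)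
          \<le> real (count_pts (\<lambda>n. arrival T n \<omega>) x) ^ m" for i
        using AE_fin
      proof eventually_elim
        case (elim \<omega>)
        have "beta0 (\<lambda>n. arrival T n \<omega>) (E i) x \<le> count_pts (\<lambda>n. arrival T n \<omega>) x"
          using elim Epos[of i] by (intro beta_le) (auto simp: S_def)
        then show ?case by (simp add: power_mono)
      qed
    qed (use intw in auto)
  qed simp
qed


end
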